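(* Let $|\!|\!|\cdot|\!|\!|$ be a norm on $X^n$, and $\mathbf{u}:=(\mathbf{u}_1,\ldots,\mathbf{u}_n)\in \mathbb{S}_X\times\ldots\times\mathbb{S}_X$ ($n$ copies of the unit sphere of $X$). Define $\psi_{\mathbf{u}}(t):=|\!|\!|(t_1\mathbf{u}_1,\ldots,t_{n}\mathbf{u}_n)|\!|\!|$ for all $t:=(t_1,\ldots,t_{n})\in\Omega_n$. (i) If $|\!|\!|\cdot|\!|\!|\in\mathbf{N}_{X^n}$, then $\psi_{\mathbf{u}}\in\mathbf{\Psi}_n$. (ii) If $|\!|\!|\cdot|\!|\!|\in\mathbf{N}^{\rm sc}_{X^n}$, then $\psi_{\mathbf{u}}\in\mathbf{\Psi}^{\rm sc}_{n}$.
   Context: Let $(X,\|\cdot\|)$ be a normed vector space, $n\ge2$. $\mathbf{N}_{X^n}$ is the family of norms $|\!|\!|\cdot|\!|\!|$ on $X^n$ satisfying (A1) $|\!|\!|(x_1,\ldots,x_n)|\!|\!|=|\!|\!|(\pm x_1,\ldots,\pm x_n)|\!|\!|$ for all $x\in X^n$ and all sign choices, and (A2) $|\!|\!|(0_X,\ldots,0_X,v,0_X,\ldots,0_X)|\!|\!|=\|v\|$ for all $v\in X$ in any $i$th position. $\mathbf{N}^{\rm sc}_{X^n}$ is the subclass of strictly convex norms in $\mathbf{N}_{X^n}$ (a norm is strictly convex if the norm of the sum of any two distinct unit vectors is $<2$). $\Omega_n:=\{t\in\mathbb{R}^n\mid t_i\ge0,\ \sum_i t_i=1\}$, $\Omega_n^\circ:=\{t\in\Omega_n\mid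 t_i<1\ \forall i\}$, $\mathbf{e}_i$ the standard unit vectors. $\mathbf{\Psi}_n$ is the class of convex continuous $\psi:\Omega_n\to\mathbb{R}$ with (B1) $\psi(\mathbf{e}_i)=1$ for all $i$ and (B2) $\psi(t)\ge(1-t_i)\psi\big(\frac{t_1}{1-t_i},\ldots,\frac{t_{i-1}}{1-t_i},0,\frac{t_{i+1}}{1-t_i},\ldots,\frac{t_n}{1-t_i}\big)$ for all $t\in\Omega_n^\circ$, $i=1,\ldots,n$; $\mathbf{\Psi}^{\rm sc}_n$ is its subclass of strictly convex functions. *)

theory Defs
  imports "HOL-Analysis.Analysis"
begin

text \<open>X is a real normed vector space (type 'a); X^n is modelled as 'a ^ 'n with
  n = CARD('n). A norm on X^n is an arbitrary function satisfying the norm axioms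
  (it need not be the library's canonical norm on vectors).\<close>

definition is_norm_on :: "('a::real_normed_vector ^ 'n::finite \<Rightarrow> real) \<Rightarrow> bool" where
  "is_norm_on N \<longleftrightarrow>
     (\<forall>x. N x = 0 \<longleftrightarrow> x = 0) \<and>
     (\<forall>c x. N (c *\<^sub>R x) = \<bar>c\<bar> * N x) \<and>
     (\<forall>x y. N (x + y) \<le> N x + N y)"

definition N_class :: "('a::real_normed_vector ^ 'n::finite \<Rightarrow> real) \<Rightarrow> bool" where
  "N_class N \<longleftrightarrow> is_norm_on N \<and>
     (\<forall>x (s :: 'n \<Rightarrow> real). (\<forall>i. s i = 1 \<or> s i = -1) \<longrightarrow>
         N (\<chi> i. s i *\<^sub>R (x $ i)) = N x) \<and>
     (\<forall>v i. N (\<chi> j. if j = i then v else 0) = norm v)"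

definition strictly_convex_norm :: "('a::real_normed_vector ^ 'n::finite \<Rightarrow> real) \<Rightarrow> bool" where
  "strictly_convex_norm N \<longleftrightarrow>
     (\<forall>x y. N x = 1 \<and> N y = 1 \<and> x \<noteq> y \<longrightarrow> N (x + y) < 2)"

definition N_sc_class :: "('a::real_normed_vector ^ 'n::finite \<Rightarrow> real) \<Rightarrow> bool" where
  "N_sc_class N \<longleftrightarrow> N_class N \<and> strictly_convex_norm N"

definition Omega :: "(real ^ 'n::finite) set" where
  "Omega = {t. (\<forall>i. 0 \<le> t $ i) \<and> (\<Sum>i\<in>UNIV. t $ i) = 1}"

definition Omega_int :: "(real ^ 'n::finite) set" where
  "Omega_int = {t \<in> Omega. \<forall>i. t $ i < 1}"

definition Psi_class :: "(real ^ 'n::finite \<Rightarrow> real) \<Rightarrow> bool" where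
  "Psi_class \<psi> \<longleftrightarrow>
     convex_on Omega \<psi> \<and> continuous_on Omega \<psi> \<and>
     (\<forall>i. \<psi> (axis i 1) = 1) \<and>
     (\<forall>t\<in>Omega_int. \<forall>i.
        \<psi> t \<ge> (1 - t $ i) * \<psi> (\<chi> j. if j = i then 0 else t $ j / (1 - t $ i)))"

definition strictly_convex_on :: "'a::real_vector set \<Rightarrow> ('a \<Rightarrow> real) \<Rightarrow> bool" where
  "strictly_convex_on S f \<longleftrightarrow>
     (\<forall>x\<in>S. \<forall>y\<in>S. \<forall>u. x \<noteq> y \<and> 0 < u \<and> u < 1 \<longrightarrow>
        f (u *\<^sub>R x + (1 - u) *\<^sub>R y) < u * f x + (1 - u) * f y)"

definition Psi_sc_class :: "(real ^ 'n::finite \<Rightarrow> real) \<Rightarrow> bool" where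
  "Psi_sc_class \<psi> \<longleftrightarrow> Psi_class \<psi> \<and> strictly_convex_on Omega \<psi>"

end

theory Submission
  imports Defs
begin

lemma nrm_basic:
  fixes N :: "'a::real_normed_vector ^ 'n::finite \<Rightarrow> real"
  assumes "is_norm_on N"
  shows "N 0 = 0" "N (- x) = N x" "N (c *\<^sub>R x) = \<bar>c\<bar> * N x" "N (x + y) \<le> N x + N y"
    "N x \<ge> 0" "N x - N y \<le> N (x - y)" "N x = 0 \<longleftrightarrow> x = 0"
proof -
  show a: "N 0 = 0" "N (c *\<^sub>R x) = \<bar>c\<bar> * N x" "N (x + y) \<le> N x + N y" "N x = 0 \<longleftrightarrow> x = 0"
    using assms unfolding is_norm_on_def by auto
  show b: "N (- x) = N x" using assms unfolding is_norm_on_def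
    by (metis abs_minus_cancel abs_one mult_1 scaleR_minus1_left)
  have "N (x + - x) \<le> N x + N (- x)" using assms unfolding is_norm_on_def by blast
  then show "N x \<ge> 0" using a b by simp
  have "N ((x - y) + y) \<le> N (x - y) + N y" using assms unfolding is_norm_on_def by blast
  then show "N x - N y \<le> N (x - y)" by simp
qed

lemma nrm_sum_bound:
  fixes N :: "'a::real_normed_vector ^ 'n::finite \<Rightarrow> real"
  assumes "is_norm_on N"
  shows "N (\<chi> i. if i \<in> A then d i *\<^sub>R u $ i else 0)
     \<le> (\<Sum>i\<in>A. \<bar>d i\<bar> * N (\<chi> j. if j = i then u $ i else 0))"
proof -
  have "finite A" by simp
  then show ?thesis
  proof (induction A rule: finite_induct)
    case empty
    have "(\<chi> i. if i \<in> {} then d i *\<^sub>R u $ i else 0) = (0::'a^'n)" by (simp add: vec_eq_iff)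
    then show ?case using nrm_basic(1)[OF assms] by simp
  next
    case (insert a A)
    have eq: "(\<chi> i. if i \<in> insert a A then d i *\<^sub>R u $ i else 0)
      = (\<chi> i. if i \<in> A then d i *\<^sub>R u $ i else 0) + d a *\<^sub>R (\<chi> j. if j = a then u $ a else 0)"
      using insert(2) by (auto simp: vec_eq_iff)
    have "N ((\<chi> i. if i \<in> A then d i *\<^sub>R u $ i else 0) + d a *\<^sub>R (\<chi> j. if j = a then u $ a else 0))
      \<le> N (\<chi> i. if i \<in> A then d i *\<^sub>R u $ i else 0) + N (d a *\<^sub>R (\<chi> j. if j = a then u $ a else 0))"
      by (rule nrm_basic(4)[OF assms])
    then show ?case unfolding eq sum.insert[OF insert(1,2)] using insert(3) nrm_basic(3)[OF assms]
      by simp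
  qed
qed

lemma sc_lemma:
  fixes N :: "'a::real_normed_vector ^ 'n::finite \<Rightarrow> real"
  assumes "is_norm_on N" "strictly_convex_norm N" "x \<noteq> 0" "y \<noteq> 0"
    "N (x + y) = N x + N y"
  shows "y = (N y / N x) *\<^sub>R x"
proof (rule ccontr)
  assume ne: "\<not> ?thesis"
  note B = nrm_basic[OF assms(1)]
  have "N x \<noteq> 0" "N y \<noteq> 0" using B(7)[of x] B(7)[of y] assms(3,4) by blast+
  then have px: "N x > 0" "N y > 0" using B(5)[of x] B(5)[of y] by linarith+
  define p where "p = (1 / N x) *\<^sub>R x"
  define q where "q = (1 / N y) *\<^sub>R y"
  have p1: "N p = 1" "N q = 1" using px B(3) unfolding p_def q_def by simp_all
  have pq: "p \<noteq> q"
  proof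
    assume "p = q"
    then have "N y *\<^sub>R p = N y *\<^sub>R q" by simp
    then have "y = (N y / N x) *\<^sub>R x" using px unfolding p_def q_def by simp
    with ne show False by simp
  qed
  have s: "N (p + q) < 2" using assms(2) p1 pq unfolding strictly_convex_norm_def by blast
  have xp: "N x *\<^sub>R p = x" "N y *\<^sub>R q = y" using px unfolding p_def q_def by auto
  show False
  proof (cases "N x \<le> N y")
    case True
    have "x + y = N x *\<^sub>R (p + q) + (N y - N x) *\<^sub>R q"
      using xp by (simp add: algebra_simps)
    moreover have "N (N x *\<^sub>R (p + q) + (N y - N x) *\<^sub>R q) \<le> N (N x *\<^sub>R (p + q)) + N ((N y - N x) *\<^sub>R q)"
      by (rule B(4))
    ultimately have "N (x + y) \<le> N x * N (p + q) + (N y - N x) * N q"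
      using B(3) True px by simp
    also have "\<dots> < N x * 2 + (N y - N x)" using s p1 px by simp
    finally show False using assms(5) by simp
  next
    case False
    have "x + y = N y *\<^sub>R (p + q) + (N x - N y) *\<^sub>R p"
      using xp by (simp add: algebra_simps)
    moreover have "N (N y *\<^sub>R (p + q) + (N x - N y) *\<^sub>R p) \<le> N (N y *\<^sub>R (p + q)) + N ((N x - N y) *\<^sub>R p)"
      by (rule B(4))
    ultimately have "N (x + y) \<le> N y * N (p + q) + (N x - N y) * N p"
      using B(3) False px by simp
    also have "\<dots> < N y * 2 + (N x - N y)" using s p1 px by simp
    finally show False using assms(5) by simp
  qed
qed

theorem theorem2p9:
  fixes N :: "'a::real_normed_vector ^ 'n::finite \<Rightarrow> real"
    and u :: "'a ^ 'n"
  assumes "CARD('n) \<ge> 2"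
    and "is_norm_on N"
    and "\<forall>i. norm (u $ i) = 1"
  defines "\<psi> \<equiv> (\<lambda>t::real ^ 'n. N (\<chi> i. t $ i *\<^sub>R u $ i))"
  shows "(N_class N \<longrightarrow> Psi_class \<psi>) \<and> (N_sc_class N \<longrightarrow> Psi_sc_class \<psi>)"
proof -
  note B = nrm_basic[OF assms(2)]
  define L where "L = (\<lambda>t::real^'n. (\<chi> i. t $ i *\<^sub>R u $ i))"
  define E where "E = (\<lambda>i. (\<chi> j. if j = i then u $ i else 0) :: 'a^'n)"
  have psiL: "\<psi> t = N (L t)" for t unfolding \<psi>_def L_def ..
  have Llin: "L (a *\<^sub>R s + b *\<^sub>R t) = a *\<^sub>R L s + b *\<^sub>R L t" for a b s t
    unfolding L_def by (simp add: vec_eq_iff algebra_simps)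
  have Ldiff: "L s - L t = L (s - t)" for s t
    unfolding L_def by (simp add: vec_eq_iff algebra_simps)
  have unz: "u $ j \<noteq> 0" for j using assms(3) by (metis norm_zero zero_neq_one)
  have Linj: "s = k *\<^sub>R t" if "L s = k *\<^sub>R L t" for s t k
  proof -
    have "s $ j = k * t $ j" for j
    proof -
      have "s $ j *\<^sub>R u $ j = (k * t $ j) *\<^sub>R u $ j"
        using that unfolding L_def by (simp add: vec_eq_iff)
      then have "(s $ j - k * t $ j) *\<^sub>R u $ j = 0" by (simp add: algebra_simps)
      then show ?thesis using unz[of j] by simp
    qed
    then show ?thesis by (simp add: vec_eq_iff)
  qed
  have convO: "convex (Omega::(real^'n) set)"
    unfolding convex_def Omega_def
  proof (intro ballI allI impI)
    fix x y :: "real^'n" and a b :: real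
    assume xy: "x \<in> {t. (\<forall>i. 0 \<le> t $ i) \<and> (\<Sum>i\<in>UNIV. t $ i) = 1}"
      "y \<in> {t. (\<forall>i. 0 \<le> t $ i) \<and> (\<Sum>i\<in>UNIV. t $ i) = 1}"
      and ab: "0 \<le> a" "0 \<le> b" "a + b = 1"
    have "(\<Sum>i\<in>UNIV. a * x $ i + b * y $ i) = a * (\<Sum>i\<in>UNIV. x $ i) + b * (\<Sum>i\<in>UNIV. y $ i)"
      by (simp add: sum.distrib sum_distrib_left)
    then show "a *\<^sub>R x + b *\<^sub>R y \<in> {t. (\<forall>i. 0 \<le> t $ i) \<and> (\<Sum>i\<in>UNIV. t $ i) = 1}"
      using xy ab by simp
  qed
  have cvx: "convex_on Omega \<psi>"
    unfolding convex_on_def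
  proof (intro conjI convO ballI allI impI)
    fix x y :: "real^'n" and a b :: real
    assume "0 \<le> a" "0 \<le> b" "a + b = 1"
    have "N (a *\<^sub>R L x + b *\<^sub>R L y) \<le> N (a *\<^sub>R L x) + N (b *\<^sub>R L y)" by (rule B(4))
    then show "\<psi> (a *\<^sub>R x + b *\<^sub>R y) \<le> a * \<psi> x + b * \<psi> y"
      unfolding psiL Llin using B(3) \<open>0 \<le> a\<close> \<open>0 \<le> b\<close> by simp
  qed
  have Lsum: "L d = (\<chi> i. if i \<in> UNIV then d $ i *\<^sub>R u $ i else 0)" for d
    unfolding L_def by simp
  define C where "C = (\<Sum>i\<in>UNIV. N (E i))"
  have C0: "C \<ge> 0" unfolding C_def using B(5) by (simp add: sum_nonneg)
  have NLd: "N (L d) \<le> C * norm d" for d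
  proof -
    have "N (L d) \<le> (\<Sum>i\<in>UNIV. \<bar>d $ i\<bar> * N (E i))"
      unfolding Lsum E_def by (rule nrm_sum_bound[OF assms(2)])
    also have "\<dots> \<le> (\<Sum>i\<in>UNIV. norm d * N (E i))"
      by (intro sum_mono mult_right_mono component_le_norm_cart B(5))
    also have "\<dots> = C * norm d" unfolding C_def by (simp add: sum_distrib_left[symmetric] mult.commute)
    finally show ?thesis .
  qed
  have cont: "continuous_on Omega \<psi>"
  proof -
    have "C-lipschitz_on UNIV \<psi>"
    proof (rule lipschitz_onI[OF _ C0])
      fix s t :: "real^'n"
      have a1: "N (L s) - N (L t) \<le> N (L (s - t))" using B(6) Ldiff by metis
      have a2: "N (L t) - N (L s) \<le> N (L (s - t))" using B(6)[of "L t" "L s"] Ldiff B(2)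
        by (metis minus_diff_eq)
      have "\<bar>N (L s) - N (L t)\<bar> \<le> C * norm (s - t)" using a1 a2 NLd[of "s - t"] by linarith
      then show "dist (\<psi> s) (\<psi> t) \<le> C * dist s t" unfolding psiL dist_real_def dist_norm .
    qed
    then have "continuous_on UNIV \<psi>" by (rule lipschitz_on_continuous_on)
    then show ?thesis by (rule continuous_on_subset) simp
  qed
  have LE: "L (axis i 1) = E i" for i unfolding L_def E_def by (simp add: vec_eq_iff axis_def)
  have ax: "\<psi> (axis i 1) = 1" if NC: "N_class N" for i
  proof -
    have "N (E i) = norm (u $ i)" using NC unfolding N_class_def E_def by blast
    then show ?thesis unfolding psiL LE using assms(3) by simp
  qed
  have B2: "\<psi> t \<ge> (1 - t $ i) * \<psi> (\<chi> j. if j = i then 0 else t $ j / (1 - t $ i))"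
    if NC: "N_class N" and t: "t \<in> Omega_int" for t i
  proof -
    define c where "c = 1 - t $ i"
    have c: "c > 0" using t unfolding Omega_int_def c_def by auto
    define x' where "x' = (\<chi> j. if j = i then 0 else t $ j *\<^sub>R u $ j)"
    define sg where "sg = (\<lambda>j. if j = i then -1 else (1::real))"
    define F where "F = (\<chi> j. sg j *\<^sub>R (L t $ j))"
    have NF: "N F = N (L t)" using NC unfolding N_class_def F_def sg_def by auto
    have "c *\<^sub>R L (\<chi> j. if j = i then 0 else t $ j / c) = x'"
      unfolding L_def x'_def using c by (simp add: vec_eq_iff)
    then have eq1: "c * \<psi> (\<chi> j. if j = i then 0 else t $ j / c) = N x'"
      unfolding psiL using B(3) c by (metis abs_of_pos)
    have "x' = (1/2) *\<^sub>R (L t + F)"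
      unfolding x'_def F_def sg_def L_def by (simp add: vec_eq_iff)
    then have "N x' = (1/2) * N (L t + F)" using B(3) by simp
    also have "\<dots> \<le> (1/2) * (N (L t) + N F)" using B(4) by simp
    finally have "N x' \<le> N (L t)" using NF by simp
    then show ?thesis using eq1 unfolding c_def psiL by simp
  qed
  have P: "Psi_class \<psi>" if NC: "N_class N"
    unfolding Psi_class_def using cvx cont ax[OF NC] B2[OF NC] by blast
  have Lnz: "L x \<noteq> 0" if "x \<in> Omega" for x
  proof
    assume "L x = 0"
    then have "L x = 0 *\<^sub>R L x" by simp
    then have "x = 0" using Linj[of x 0 x] by simp
    then show False using that unfolding Omega_def by simp
  qed
  have SC: "strictly_convex_on Omega \<psi>" if SC: "strictly_convex_norm N"
    unfolding strictly_convex_on_def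
  proof (intro ballI allI impI)
    fix x y :: "real^'n" and a :: real
    assume xy: "x \<in> Omega" "y \<in> Omega" and h: "x \<noteq> y \<and> 0 < a \<and> a < 1"
    define P where "P = a *\<^sub>R L x"
    define Q where "Q = (1 - a) *\<^sub>R L y"
    have Pnz: "P \<noteq> 0" "Q \<noteq> 0" unfolding P_def Q_def using h Lnz xy by auto
    have le: "N (P + Q) \<le> N P + N Q" by (rule B(4))
    have NP: "N P = a * N (L x)" "N Q = (1 - a) * N (L y)" unfolding P_def Q_def using B(3) h by auto
    show "\<psi> (a *\<^sub>R x + (1 - a) *\<^sub>R y) < a * \<psi> x + (1 - a) * \<psi> y"
    proof (rule ccontr)
      assume "\<not> ?thesis"
      then have "N (P + Q) = N P + N Q" using le NP unfolding psiL Llin P_def Q_def by simp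
      then have "Q = (N Q / N P) *\<^sub>R P" by (rule sc_lemma[OF assms(2) SC Pnz])
      then have e: "(1 - a) *\<^sub>R L y = ((N Q / N P) * a) *\<^sub>R L x"
        unfolding P_def Q_def by simp
      have "L y = (1 / (1 - a)) *\<^sub>R ((1 - a) *\<^sub>R L y)" using h by simp
      also have "\<dots> = ((N Q / N P) * a / (1 - a)) *\<^sub>R L x" unfolding e by simp
      finally have "L y = ((N Q / N P) * a / (1 - a)) *\<^sub>R L x" .
      then have yx: "y = ((N Q / N P) * a / (1 - a)) *\<^sub>R x" by (rule Linj)
      define k where "k = (N Q / N P) * a / (1 - a)"
      have "sum (($) y) UNIV = k * sum (($) x) UNIV"
        unfolding yx k_def by (simp add: sum_distrib_left)
      then have "k = 1" using xy unfolding Omega_def by simp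
      then show False using yx h unfolding k_def[symmetric] by simp
    qed
  qed
  show ?thesis using P SC unfolding N_sc_class_def Psi_sc_class_def by blast
qed

end
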